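(* Let $(X,M,* )$ be a G-complete fuzzy metric space and let $(\hat{C}_0(X),\Theta_{\mathcal{M}},* )$ be the associated Hausdorff fuzzy metric space on the collection $\hat{C}_0(X)$ of nonempty compact subsets of $X$. Let $T:X\to\hat{C}_0(X)$ be a multi-valued (1)-Kannan contraction, i.e. there is a constant $c\in(0,1)$ such that for all $x,y\in X$ and all $t>0$, \[ \min\{\mathcal{M}(x,Tx,t),\mathcal{M}(y,Ty,t)\}>1-t \;\Longrightarrow\; \Theta_{\mathcal{M}}(Tx,Ty,ct)>1-ct. \] Then $T$ has a fixed point, i.e. there exists $z\in X$ with $z\in Tz$.
   Context: A continuous $t$-norm is a binary operation $*:[0,1]\times[0,1]\to[0,1]$ that is associative, commutative, continuous, satisfies $a*1=a$ for all $a\in[0,1]$, and is monotone: $a*b\le c*d$ whenever $a\le c$ and $b\le d$. A fuzzy metric space (in the sense of George–Veeramani) is a triple $(X,M,* )$ where $X$ is a nonempty set, $*$ is a continuous $t$-norm and $M:X\times X\times(0,\infty)\to[0,1]$ satisfies, for all $x,y,z\in X$ and $t,s>0$: (F1) $M(x,y,t)>0$; (F2) $M(x,y,t)=1$ for all $t>0$ iff $x=y$; (F3) $M(x,y,t)=M(y,x,t)$; (F4) $M(x,z,t+s)\ge M(x,y,t)*M(y,z,s)$; (F5) $M(x,y,\cdot):(0,\infty)\to[0,1]$ is continuous. A sequence $(x_n)$ in $X$ converges to $x\in X$ if $\lim_{n\to\infty}M(x_n,x,t)=1$ for all $t>0$; it is a G-Cauchy sequence if $\lim_{n\to\infty}M(x_n,x_{n+q},t)=1$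 for all $t>0$ and all $q\in\mathbb{N}$; $(X,M,* )$ is G-complete if every G-Cauchy sequence converges. Compactness in $X$ refers to the topology induced by $M$ (open balls $B(x,r,t)=\{y: M(x,y,t)>1-r\}$). For a nonempty $A\subseteq X$, $\rho\in X$ and $t>0$, $\mathcal{M}(\rho,A,t)=\mathcal{M}(A,\rho,t)=\sup\{M(\rho,\mu,t):\mu\in A\}$. For $A,B\in\hat{C}_0(X)$ and $t>0$, $\Theta_{\mathcal{M}}(A,B,t)=\min\{\inf_{\rho\in A}\mathcal{M}(\rho,B,t),\ \inf_{\mu\in B}\mathcal{M}(A,\mu,t)\}$; the triple $(\hat{C}_0(X),\Theta_{\mathcal{M}},* )$ is called the Hausdorff fuzzy metric space. *)

theory Defs
  imports "HOL-Analysis.Analysis"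
begin

definition cont_tnorm :: "(real \<Rightarrow> real \<Rightarrow> real) \<Rightarrow> bool" where
  "cont_tnorm tn \<longleftrightarrow>
     (\<forall>a\<in>{0..1}. \<forall>b\<in>{0..1}. tn a b \<in> {0..1}) \<and>
     (\<forall>a\<in>{0..1}. \<forall>b\<in>{0..1}. \<forall>c\<in>{0..1}. tn (tn a b) c = tn a (tn b c)) \<and>
     (\<forall>a\<in>{0..1}. \<forall>b\<in>{0..1}. tn a b = tn b a) \<and>
     continuous_on ({0..1} \<times> {0..1}) (\<lambda>(a,b). tn a b) \<and>
     (\<forall>a\<in>{0..1}. tn a 1 = a) \<and>
     (\<forall>a\<in>{0..1}. \<forall>b\<in>{0..1}. \<forall>c\<in>{0..1}. \<forall>d\<in>{0..1}.
        a \<le> c \<longrightarrow> b \<le> d \<longrightarrow> tn a b \<le> tn c d)"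

definition fuzzy_metric_space :: "('a \<Rightarrow> 'a \<Rightarrow> real \<Rightarrow> real) \<Rightarrow> (real \<Rightarrow> real \<Rightarrow> real) \<Rightarrow> bool" where
  "fuzzy_metric_space M tn \<longleftrightarrow> cont_tnorm tn \<and>
     (\<forall>x y t. t > 0 \<longrightarrow> M x y t \<in> {0..1}) \<and>
     (\<forall>x y t. t > 0 \<longrightarrow> M x y t > 0) \<and>
     (\<forall>x y. (\<forall>t>0. M x y t = 1) \<longleftrightarrow> x = y) \<and>
     (\<forall>x y t. t > 0 \<longrightarrow> M x y t = M y x t) \<and>
     (\<forall>x y z t s. t > 0 \<longrightarrow> s > 0 \<longrightarrow> M x z (t + s) \<ge> tn (M x y t) (M y z s)) \<and>
     (\<forall>x y. continuous_on {0<..} (M x y))"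

definition fuzzy_converges :: "('a \<Rightarrow> 'a \<Rightarrow> real \<Rightarrow> real) \<Rightarrow> (nat \<Rightarrow> 'a) \<Rightarrow> 'a \<Rightarrow> bool" where
  "fuzzy_converges M xs x \<longleftrightarrow> (\<forall>t>0. (\<lambda>n. M (xs n) x t) \<longlonglongrightarrow> 1)"

definition G_Cauchy :: "('a \<Rightarrow> 'a \<Rightarrow> real \<Rightarrow> real) \<Rightarrow> (nat \<Rightarrow> 'a) \<Rightarrow> bool" where
  "G_Cauchy M xs \<longleftrightarrow> (\<forall>t>0. \<forall>q::nat. (\<lambda>n. M (xs n) (xs (n + q)) t) \<longlonglongrightarrow> 1)"

definition G_complete :: "('a \<Rightarrow> 'a \<Rightarrow> real \<Rightarrow> real) \<Rightarrow> bool" where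
  "G_complete M \<longleftrightarrow> (\<forall>xs. G_Cauchy M xs \<longrightarrow> (\<exists>x. fuzzy_converges M xs x))"

definition fuzzy_ball :: "('a \<Rightarrow> 'a \<Rightarrow> real \<Rightarrow> real) \<Rightarrow> 'a \<Rightarrow> real \<Rightarrow> real \<Rightarrow> 'a set" where
  "fuzzy_ball M x r t = {y. M x y t > 1 - r}"

definition fuzzy_topology :: "('a \<Rightarrow> 'a \<Rightarrow> real \<Rightarrow> real) \<Rightarrow> 'a topology" where
  "fuzzy_topology M = topology (\<lambda>U. \<forall>x\<in>U. \<exists>r t. 0 < r \<and> r < 1 \<and> 0 < t \<and> fuzzy_ball M x r t \<subseteq> U)"

definition Msup :: "('a \<Rightarrow> 'a \<Rightarrow> real \<Rightarrow> real) \<Rightarrow> 'a \<Rightarrow> 'a set \<Rightarrow> real \<Rightarrow> real" where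
  "Msup M x A t = (SUP y\<in>A. M x y t)"

definition Theta :: "('a \<Rightarrow> 'a \<Rightarrow> real \<Rightarrow> real) \<Rightarrow> 'a set \<Rightarrow> 'a set \<Rightarrow> real \<Rightarrow> real" where
  "Theta M A B t = min (INF x\<in>A. Msup M x B t) (INF y\<in>B. Msup M y A t)"

definition C0 :: "('a \<Rightarrow> 'a \<Rightarrow> real \<Rightarrow> real) \<Rightarrow> 'a set set" where
  "C0 M = {A. A \<noteq> {} \<and> compactin (fuzzy_topology M) A}"

end

theory Submission imports Defs begin

locale fms =
  fixes M :: "'a \<Rightarrow> 'a \<Rightarrow> real \<Rightarrow> real" and tn :: "real \<Rightarrow> real \<Rightarrow> real"
  assumes fm: "fuzzy_metric_space M tn"
begin

lemma tnorm: "cont_tnorm tn" using fm unfolding fuzzy_metric_space_def by blast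

lemma tn_range: "a \<in> {0..1} \<Longrightarrow> b \<in> {0..1} \<Longrightarrow> tn a b \<in> {0..1}"
  using tnorm unfolding cont_tnorm_def by blast
lemma tn_comm: "a \<in> {0..1} \<Longrightarrow> b \<in> {0..1} \<Longrightarrow> tn a b = tn b a"
  using tnorm unfolding cont_tnorm_def by blast
lemma tn_one: "a \<in> {0..1} \<Longrightarrow> tn a 1 = a"
  using tnorm unfolding cont_tnorm_def by blast
lemma tn_one': "a \<in> {0..1} \<Longrightarrow> tn 1 a = a"
  using tn_one[of a] tn_comm[of a 1] by simp
lemma tn_mono: "a \<in> {0..1} \<Longrightarrow> b \<in> {0..1} \<Longrightarrow> c \<in> {0..1} \<Longrightarrow> d \<in> {0..1} \<Longrightarrow>
   a \<le> c \<Longrightarrow> b \<le> d \<Longrightarrow> tn a b \<le> tn c d"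
  using tnorm unfolding cont_tnorm_def by blast
lemma tn_cont: "continuous_on ({0..1} \<times> {0..1}) (\<lambda>(a,b). tn a b)"
  using tnorm unfolding cont_tnorm_def by blast

lemma tn_lim:
  assumes "f \<longlonglongrightarrow> a" "g \<longlonglongrightarrow> b" "\<And>n. f n \<in> {0..1}" "\<And>n. g n \<in> {0..1}"
    "a \<in> {0..1}" "b \<in> {0..1}"
  shows "(\<lambda>n. tn (f n) (g n)) \<longlonglongrightarrow> tn a b"
proof -
  have "((\<lambda>n. (\<lambda>(a,b). tn a b) (f n, g n)) \<longlongrightarrow> (\<lambda>(a,b). tn a b) (a, b)) sequentially"
    by (rule continuous_on_tendsto_compose[OF tn_cont]) (use assms in \<open>auto intro: tendsto_Pair\<close>)
  then show ?thesis by simp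
qed

lemmas fmD1 = fm[unfolded fuzzy_metric_space_def, THEN conjunct2, THEN conjunct1]
lemmas fmD2 = fm[unfolded fuzzy_metric_space_def, THEN conjunct2, THEN conjunct2, THEN conjunct1]
lemmas fmD3 = fm[unfolded fuzzy_metric_space_def, THEN conjunct2, THEN conjunct2, THEN conjunct2, THEN conjunct1]
lemmas fmD4 = fm[unfolded fuzzy_metric_space_def, THEN conjunct2, THEN conjunct2, THEN conjunct2, THEN conjunct2, THEN conjunct1]
lemmas fmD5 = fm[unfolded fuzzy_metric_space_def, THEN conjunct2, THEN conjunct2, THEN conjunct2, THEN conjunct2, THEN conjunct2, THEN conjunct1]
lemmas fmD6 = fm[unfolded fuzzy_metric_space_def, THEN conjunct2, THEN conjunct2, THEN conjunct2, THEN conjunct2, THEN conjunct2, THEN conjunct2]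

lemma M01: "t > 0 \<Longrightarrow> M x y t \<in> {0..1}" using fmD1 by blast
lemma Mpos: "t > 0 \<Longrightarrow> M x y t > 0" using fmD2 by blast
lemma Mle1: "t > 0 \<Longrightarrow> M x y t \<le> 1" using M01 by auto
lemma Mxx: "t > 0 \<Longrightarrow> M x x t = 1" using fmD3[rule_format, of x x] by blast
lemma Meq: assumes "\<And>t. t > 0 \<Longrightarrow> M x y t = 1" shows "x = y"
proof -
  have "(\<forall>t>0. M x y t = 1) \<longleftrightarrow> x = y" by (rule fmD3[rule_format, of x y])
  then show ?thesis using assms by blast
qed
lemma Msym: "t > 0 \<Longrightarrow> M x y t = M y x t" using fmD4 by blast
lemma Mtri: "t > 0 \<Longrightarrow> s > 0 \<Longrightarrow> M x z (t + s) \<ge> tn (M x y t) (M y z s)"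
  using fmD5 by blast
lemma Mcont: "continuous_on {0<..} (M x y)" using fmD6 by blast

lemma Mmono: assumes "0 < s" "s \<le> t" shows "M x y s \<le> M x y t"
proof (cases "s = t")
  case False
  then have "t - s > 0" using assms by simp
  from Mtri[OF assms(1) this, of x y y] have "tn (M x y s) (M y y (t - s)) \<le> M x y t" by simp
  then show ?thesis using Mxx[OF \<open>t - s > 0\<close>] tn_one[OF M01[OF assms(1)]] by simp
qed simp

lemma Mbdd: "t > 0 \<Longrightarrow> bdd_above ((\<lambda>y. M x y t) ` A)"
  using Mle1 by (intro bdd_aboveI2[where M=1]) auto

lemma Msup_upper: "t > 0 \<Longrightarrow> w \<in> A \<Longrightarrow> M x w t \<le> Msup M x A t"
  unfolding Msup_def by (rule cSUP_upper) (auto intro: Mbdd)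

lemma Msup_gt: "t > 0 \<Longrightarrow> A \<noteq> {} \<Longrightarrow> Msup M x A t > a \<Longrightarrow> \<exists>w\<in>A. M x w t > a"
  unfolding Msup_def using less_cSUP_iff[OF _ Mbdd] by blast

lemma Msup_pos: "t > 0 \<Longrightarrow> A \<noteq> {} \<Longrightarrow> Msup M x A t > 0"
  using Msup_upper Mpos by (meson ex_in_conv less_le_trans)

lemma Msup_mono: "0 < s \<Longrightarrow> s \<le> t \<Longrightarrow> A \<noteq> {} \<Longrightarrow> Msup M x A s \<le> Msup M x A t"
  unfolding Msup_def by (rule cSUP_mono) (auto intro: Mbdd Mmono)

lemma Theta_gt: assumes "t > 0" "A \<noteq> {}" "B \<noteq> {}" "Theta M A B t > a" "x \<in> A"
  shows "Msup M x B t > a"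
proof -
  have "bdd_below ((\<lambda>x. Msup M x B t) ` A)"
    using Msup_pos[OF assms(1,3)] by (intro bdd_belowI2[where m=0]) (auto intro: less_imp_le)
  then have "(INF x\<in>A. Msup M x B t) \<le> Msup M x B t" by (rule cINF_lower) fact
  then show ?thesis using assms(4) unfolding Theta_def by linarith
qed


lemma ball_open:
  assumes "t > 0" "w \<in> fuzzy_ball M y r t"
  shows "\<exists>r1 t1. 0 < r1 \<and> r1 < 1 \<and> 0 < t1 \<and> fuzzy_ball M w r1 t1 \<subseteq> fuzzy_ball M y r t"
proof -
  have gt: "M y w t > 1 - r" using assms(2) unfolding fuzzy_ball_def by simp
  define sq where "sq n = t - t / (real n + 2)" for n :: nat
  have sqpos: "0 < sq n" "sq n < t" for n
  proof -
    have "t / (real n + 2) \<le> t / 2" using assms(1) by (intro divide_left_mono) auto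
    moreover have "t / (real n + 2) > 0" using assms(1) by simp
    ultimately show "0 < sq n" "sq n < t" unfolding sq_def using assms(1) by linarith+
  qed
  have "sq \<longlonglongrightarrow> t - 0" unfolding sq_def
    by (intro tendsto_diff tendsto_const tendsto_divide_0[OF tendsto_const]) real_asymp
  then have "sq \<longlonglongrightarrow> t" by simp
  then have "(\<lambda>n. M y w (sq n)) \<longlonglongrightarrow> M y w t"
    by (rule continuous_on_tendsto_compose[OF Mcont]) (use assms(1) sqpos in auto)
  then have "eventually (\<lambda>n. M y w (sq n) > 1 - r) sequentially"
    using gt by (rule order_tendstoD)
  then obtain N where N: "M y w (sq N) > 1 - r" by (auto simp: eventually_sequentially)
  define s0 where "s0 = sq N"
  define a where "a = M y w s0"
  have a01: "a \<in> {0..1}" unfolding a_def s0_def using M01 sqpos by blast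
  have "(\<lambda>n. tn a (1 - 1 / (real n + 2))) \<longlonglongrightarrow> tn a 1"
  proof (rule tn_lim[OF tendsto_const])
    show "(\<lambda>n. 1 - 1 / (real n + 2)) \<longlonglongrightarrow> 1" by real_asymp
  qed (use a01 in \<open>auto simp: field_simps\<close>)
  then have "eventually (\<lambda>n. tn a (1 - 1 / (real n + 2)) > 1 - r) sequentially"
    using N tn_one[OF a01] unfolding a_def s0_def by (intro order_tendstoD) auto
  then obtain n1 where n1: "tn a (1 - 1 / (real n1 + 2)) > 1 - r" by (auto simp: eventually_sequentially)
  define r1 where "r1 = 1 / (real n1 + 2)"
  define t1 where "t1 = t - s0"
  have t1: "t1 > 0" "s0 > 0" unfolding t1_def s0_def using sqpos by auto
  have "fuzzy_ball M w r1 t1 \<subseteq> fuzzy_ball M y r t"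
  proof
    fix v assume "v \<in> fuzzy_ball M w r1 t1"
    then have v: "M w v t1 > 1 - r1" unfolding fuzzy_ball_def by simp
    have "tn a (1 - r1) \<le> tn a (M w v t1)"
      by (rule tn_mono) (use a01 M01[OF t1(1)] v in \<open>auto simp: r1_def field_simps\<close>)
    also have "\<dots> \<le> M y v (s0 + t1)" unfolding a_def by (rule Mtri) (use t1 in auto)
    also have "s0 + t1 = t" unfolding t1_def by simp
    finally show "v \<in> fuzzy_ball M y r t" using n1 unfolding fuzzy_ball_def r1_def by simp
  qed
  moreover have "0 < r1" "r1 < 1" unfolding r1_def by (auto simp: field_simps)
  ultimately show ?thesis using t1 by blast
qed

lemma istop: "istopology (\<lambda>U. \<forall>x\<in>U. \<exists>r t. 0 < r \<and> r < 1 \<and> 0 < t \<and> fuzzy_ball M x r t \<subseteq> U)"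
  unfolding istopology_def
proof (intro conjI allI impI)
  fix S T
  assume S: "\<forall>x\<in>S. \<exists>r t. 0 < r \<and> r < 1 \<and> 0 < t \<and> fuzzy_ball M x r t \<subseteq> S"
    and T: "\<forall>x\<in>T. \<exists>r t. 0 < r \<and> r < 1 \<and> 0 < t \<and> fuzzy_ball M x r t \<subseteq> T"
  show "\<forall>x\<in>S \<inter> T. \<exists>r t. 0 < r \<and> r < 1 \<and> 0 < t \<and> fuzzy_ball M x r t \<subseteq> S \<inter> T"
  proof
    fix x assume "x \<in> S \<inter> T"
    then obtain r1 t1 r2 t2 where 1: "0 < r1" "r1 < 1" "0 < t1" "fuzzy_ball M x r1 t1 \<subseteq> S"
      and 2: "0 < r2" "r2 < 1" "0 < t2" "fuzzy_ball M x r2 t2 \<subseteq> T" using S T by blast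
    have "fuzzy_ball M x (min r1 r2) (min t1 t2) \<subseteq> fuzzy_ball M x r1 t1"
      "fuzzy_ball M x (min r1 r2) (min t1 t2) \<subseteq> fuzzy_ball M x r2 t2"
    proof -
      have m: "0 < min t1 t2" using 1 2 by simp
      show "fuzzy_ball M x (min r1 r2) (min t1 t2) \<subseteq> fuzzy_ball M x r1 t1"
      proof
        fix v assume "v \<in> fuzzy_ball M x (min r1 r2) (min t1 t2)"
        then have "M x v (min t1 t2) > 1 - min r1 r2" unfolding fuzzy_ball_def by simp
        moreover have "M x v (min t1 t2) \<le> M x v t1" by (rule Mmono[OF m]) simp
        ultimately show "v \<in> fuzzy_ball M x r1 t1" unfolding fuzzy_ball_def by simp
      qed
      show "fuzzy_ball M x (min r1 r2) (min t1 t2) \<subseteq> fuzzy_ball M x r2 t2"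
      proof
        fix v assume "v \<in> fuzzy_ball M x (min r1 r2) (min t1 t2)"
        then have "M x v (min t1 t2) > 1 - min r1 r2" unfolding fuzzy_ball_def by simp
        moreover have "M x v (min t1 t2) \<le> M x v t2" by (rule Mmono[OF m]) simp
        ultimately show "v \<in> fuzzy_ball M x r2 t2" unfolding fuzzy_ball_def by simp
      qed
    qed
    then show "\<exists>r t. 0 < r \<and> r < 1 \<and> 0 < t \<and> fuzzy_ball M x r t \<subseteq> S \<inter> T"
      using 1 2 by (intro exI[of _ "min r1 r2"] exI[of _ "min t1 t2"]) auto
  qed
next
  fix K :: "'a set set"
  assume "\<forall>U\<in>K. \<forall>x\<in>U. \<exists>r t. 0 < r \<and> r < 1 \<and> 0 < t \<and> fuzzy_ball M x r t \<subseteq> U"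
  then show "\<forall>x\<in>\<Union>K. \<exists>r t. 0 < r \<and> r < 1 \<and> 0 < t \<and> fuzzy_ball M x r t \<subseteq> \<Union>K"
    by (meson Union_upper subset_trans UnionE)
qed

lemma openin_ft: "openin (fuzzy_topology M) U \<longleftrightarrow>
   (\<forall>x\<in>U. \<exists>r t. 0 < r \<and> r < 1 \<and> 0 < t \<and> fuzzy_ball M x r t \<subseteq> U)"
  unfolding fuzzy_topology_def using topology_inverse'[OF istop] by simp

lemma ball_openin: "t > 0 \<Longrightarrow> openin (fuzzy_topology M) (fuzzy_ball M y r t)"
  unfolding openin_ft using ball_open by blast


lemma closed_lemma:
  assumes cpt: "compactin (fuzzy_topology M) A" and ne: "A \<noteq> {}"
    and near: "\<And>t e. t > 0 \<Longrightarrow> e > 0 \<Longrightarrow> \<exists>w\<in>A. M z w t > 1 - e"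
  shows "z \<in> A"
proof (rule ccontr)
  assume zA: "z \<notin> A"
  have "\<forall>y\<in>A. \<exists>s r. 0 < s \<and> 0 < r \<and> r < 1 \<and> M z y (s + s) < tn (1 - r) (1 - r)"
  proof
    fix y assume "y \<in> A"
    then have "z \<noteq> y" using zA by auto
    then obtain t where t: "t > 0" "M z y t \<noteq> 1" using Meq by blast
    then have lt: "M z y t < 1" using Mle1[OF t(1), of z y] by linarith
    have "(\<lambda>n. tn (1 - 1 / (real n + 2)) (1 - 1 / (real n + 2))) \<longlonglongrightarrow> tn 1 1"
      by (rule tn_lim) (real_asymp, real_asymp, auto simp: field_simps)
    then have "eventually (\<lambda>n. tn (1 - 1 / (real n + 2)) (1 - 1 / (real n + 2)) > M z y t) sequentially"
      using lt tn_one[of 1] by (intro order_tendstoD) auto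
    then obtain n where n: "tn (1 - 1 / (real n + 2)) (1 - 1 / (real n + 2)) > M z y t"
      by (auto simp: eventually_sequentially)
    show "\<exists>s r. 0 < s \<and> 0 < r \<and> r < 1 \<and> M z y (s + s) < tn (1 - r) (1 - r)"
      by (rule exI[of _ "t/2"], rule exI[of _ "1 / (real n + 2)"]) (use t n in \<open>auto simp: field_simps\<close>)
  qed
  then have ex: "\<exists>s r. 0 < s \<and> 0 < r \<and> r < 1 \<and> M z y (s + s) < tn (1 - r) (1 - r)" if "y \<in> A" for y
    using that by blast
  define s where "s y = (SOME s. \<exists>r. 0 < s \<and> 0 < r \<and> r < 1 \<and> M z y (s + s) < tn (1 - r) (1 - r))" for y
  define r where "r y = (SOME r. 0 < s y \<and> 0 < r \<and> r < 1 \<and> M z y (s y + s y) < tn (1 - r) (1 - r))" for y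
  have sr: "0 < s y \<and> 0 < r y \<and> r y < 1 \<and> M z y (s y + s y) < tn (1 - r y) (1 - r y)" if "y \<in> A" for y
  proof -
    have "\<exists>r. 0 < s y \<and> 0 < r \<and> r < 1 \<and> M z y (s y + s y) < tn (1 - r) (1 - r)"
      unfolding s_def by (rule someI_ex) (rule ex[OF that])
    then show ?thesis unfolding r_def by (rule someI_ex)
  qed
  define U where "U = (\<lambda>y. fuzzy_ball M y (r y) (s y)) ` A"
  have "\<forall>u\<in>U. openin (fuzzy_topology M) u" unfolding U_def using sr ball_openin by auto
  moreover have "A \<subseteq> \<Union>U"
  proof
    fix y assume y: "y \<in> A"
    then have "M y y (s y) = 1" using sr Mxx by blast
    then have "y \<in> fuzzy_ball M y (r y) (s y)" unfolding fuzzy_ball_def using sr[OF y] by simp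
    then show "y \<in> \<Union>U" unfolding U_def using y by blast
  qed
  ultimately obtain F where F: "finite F" "F \<subseteq> U" "A \<subseteq> \<Union>F"
    using cpt unfolding compactin_def by blast
  obtain Y where Y: "Y \<subseteq> A" "finite Y" "F = (\<lambda>y. fuzzy_ball M y (r y) (s y)) ` Y"
    using finite_subset_image[OF F(1) F(2)[unfolded U_def]] by blast
  have Yne: "Y \<noteq> {}" using Y F ne by auto
  define s0 where "s0 = Min (s ` Y)"
  define r0 where "r0 = Min (r ` Y)"
  have s0: "s0 > 0" unfolding s0_def using Y Yne sr by (subst Min_gr_iff) auto
  have r0: "r0 > 0" unfolding r0_def using Y Yne sr by (subst Min_gr_iff) auto
  obtain w where w: "w \<in> A" "M z w s0 > 1 - r0" using near[OF s0 r0] by blast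
  then have "w \<in> \<Union>F" using F(3) by blast
  then obtain y where y: "y \<in> Y" "w \<in> fuzzy_ball M y (r y) (s y)" unfolding Y(3) by blast
  have yA: "y \<in> A" using y Y by auto
  have s0le: "s0 \<le> s y" unfolding s0_def using Y y by auto
  have r0le: "r0 \<le> r y" unfolding r0_def using Y y by auto
  have sy: "0 < s y" "0 < r y" "r y < 1" using sr[OF yA] by auto
  have 1: "M z w (s y) > 1 - r y" using Mmono[OF s0 s0le, of z w] w r0le by simp
  have 2: "M w y (s y) > 1 - r y" using y Msym[OF sy(1), of y w] unfolding fuzzy_ball_def by simp
  have "tn (1 - r y) (1 - r y) \<le> tn (M z w (s y)) (M w y (s y))"
    by (rule tn_mono) (use 1 2 sy M01[OF sy(1)] in auto)
  also have "\<dots> \<le> M z y (s y + s y)" by (rule Mtri) (use sy in auto)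
  finally show False using sr[OF yA] by simp
qed


lemma main:
  fixes T :: "'a \<Rightarrow> 'a set" and c :: real
  assumes GC: "G_complete M"
    and TC: "\<forall>x. T x \<in> C0 M"
    and c: "0 < c" "c < 1"
    and K: "\<forall>x y t. t > 0 \<longrightarrow> min (Msup M x (T x) t) (Msup M y (T y) t) > 1 - t
           \<longrightarrow> Theta M (T x) (T y) (c * t) > 1 - c * t"
  shows "\<exists>z. z \<in> T z"
proof -
  define P where "P x t \<longleftrightarrow> Msup M x (T x) t > 1 - t" for x t
  have neT: "T x \<noteq> {}" for x using TC unfolding C0_def by blast
  have Ptriv: "P x t" if "t \<ge> 1" for x t
  proof -
    have "t > 0" using that by simp
    then show ?thesis unfolding P_def using Msup_pos[of t "T x" x] neT[of x] that by simp
  qed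
  have Pmono: "P x u" if "P x s" "0 < s" "s \<le> u" for x s u
    using that Msup_mono[OF that(2,3) neT[of x], of x] unfolding P_def by simp
  have R: "P y (c * max s t)" if "y \<in> T x" "P y s" "s > 0" "P x t" "t > 0" for x y s t
  proof -
    define u where "u = max s t"
    have u: "u > 0" "s \<le> u" "t \<le> u" unfolding u_def using that by auto
    have Py: "P y u" using Pmono[OF that(2,3) u(2)] .
    have Px: "P x u" using Pmono[OF that(4,5) u(3)] .
    have Th: "Theta M (T x) (T y) (c * u) > 1 - c * u"
      by (rule K[rule_format, OF u(1)]) (use Px Py in \<open>simp add: P_def\<close>)
    have cu: "c * u > 0" using u c by simp
    have "Msup M y (T y) (c * u) > 1 - c * u"
      by (rule Theta_gt[OF cu neT[of x] neT[of y] Th that(1)])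
    then show ?thesis unfolding P_def u_def by simp
  qed
  have K2: "P y (c * t)" if "y \<in> T x" "t > 0" "P x t" for x y t
  proof -
    define m where "m = max 1 t"
    have m: "m > 0" "m \<ge> 1" unfolding m_def by auto
    have inv: "P y (max (c * t) (c ^ k * m))" for k
    proof (induction k)
      case 0
      then show ?case using m by (intro Ptriv) auto
    next
      case (Suc k)
      define s where "s = max (c * t) (c ^ k * m)"
      have s: "s > 0" unfolding s_def using c that m by (auto intro: less_max_iff_disj[THEN iffD2])
      have "P y (c * max s t)" by (rule R[OF that(1) Suc[folded s_def] s that(3,2)])
      moreover have "c * max s t \<le> max (c * t) (c ^ Suc k * m)"
      proof (cases "s \<le> t")
        case True then show ?thesis using c by (simp add: max_def)
      next
        case False
        then have "c * max s t = c * s" by simp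
        also have "\<dots> = max (c * (c * t)) (c ^ Suc k * m)" unfolding s_def using c
          by (simp add: max_mult_distrib_left)
        also have "\<dots> \<le> max (c * t) (c ^ Suc k * m)"
          using c that(2) by (intro max.mono) (auto simp: mult_le_cancel_right1 mult.assoc[symmetric])
        finally show ?thesis .
      qed
      moreover have "c * max s t > 0" using c s by (auto intro: mult_pos_pos less_max_iff_disj[THEN iffD2])
      ultimately show ?case using Pmono by blast
    qed
    have "(\<lambda>k. c ^ k) \<longlonglongrightarrow> 0" using c by (intro LIMSEQ_power_zero) auto
    then have "eventually (\<lambda>k. c ^ k < c * t / m) sequentially"
      using c that(2) m by (intro order_tendstoD) auto
    then obtain k where "c ^ k < c * t / m" by (auto simp: eventually_sequentially)
    then have "c ^ k * m \<le> c * t" using m by (simp add: field_simps)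
    then show ?thesis using inv[of k] by (simp add: max_def split: if_splits)
  qed
  obtain x0 :: 'a where True by blast
  define xs where "xs = rec_nat x0 (\<lambda>n x. SOME y. y \<in> T x \<and> M x y (c ^ n) > 1 - c ^ n)"
  have xs0: "xs 0 = x0" unfolding xs_def by simp
  have xsS: "xs (Suc n) = (SOME y. y \<in> T (xs n) \<and> M (xs n) y (c ^ n) > 1 - c ^ n)" for n
    unfolding xs_def by simp
  have cpos: "c ^ n > 0" for n using c by simp
  have step: "xs (Suc n) \<in> T (xs n) \<and> M (xs n) (xs (Suc n)) (c ^ n) > 1 - c ^ n"
    if "P (xs n) (c ^ n)" for n
  proof -
    have "\<exists>y. y \<in> T (xs n) \<and> M (xs n) y (c ^ n) > 1 - c ^ n"
      using Msup_gt[OF cpos neT[of "xs n"]] that unfolding P_def by blast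
    then show ?thesis unfolding xsS by (rule someI_ex)
  qed
  have Pxs: "P (xs n) (c ^ n)" for n
  proof (induction n)
    case 0 then show ?case by (intro Ptriv) simp
  next
    case (Suc n)
    then show ?case using K2[OF step[OF Suc, THEN conjunct1] cpos Suc] by simp
  qed
  have inT: "xs (Suc n) \<in> T (xs n)" for n using step[OF Pxs] by blast
  have close: "M (xs n) (xs (Suc n)) (c ^ n) > 1 - c ^ n" for n using step[OF Pxs] by blast
  have cn0: "(\<lambda>n. c ^ n) \<longlonglongrightarrow> 0" using c by (intro LIMSEQ_power_zero) auto
  have conv1: "(\<lambda>n. M (xs n) (xs (Suc n)) t) \<longlonglongrightarrow> 1" if "t > 0" for t
  proof (rule tendsto_sandwich[where f="\<lambda>n. 1 - c ^ n" and h="\<lambda>n. 1"])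
    have "eventually (\<lambda>n. c ^ n < t) sequentially" using cn0 that by (intro order_tendstoD) auto
    then show "eventually (\<lambda>n. 1 - c ^ n \<le> M (xs n) (xs (Suc n)) t) sequentially"
    proof (rule eventually_mono)
      fix n assume "c ^ n < t"
      then show "1 - c ^ n \<le> M (xs n) (xs (Suc n)) t"
        using close[of n] Mmono[where s="c ^ n" and t=t and x="xs n" and y="xs (Suc n)"] cpos[of n] by simp
    qed
    show "eventually (\<lambda>n. M (xs n) (xs (Suc n)) t \<le> 1) sequentially" using Mle1[OF that] by simp
    show "(\<lambda>n. 1 - c ^ n) \<longlonglongrightarrow> 1" using tendsto_diff[OF tendsto_const cn0, of 1] by simp
  qed simp
  have cauchy: "(\<lambda>n. M (xs n) (xs (n + q)) t) \<longlonglongrightarrow> 1" if "t > 0" for q t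
    using that
  proof (induction q arbitrary: t)
    case 0 then show ?case using Mxx by simp
  next
    case (Suc q)
    have t2: "t / 2 > 0" using Suc by simp
    have a: "(\<lambda>n. M (xs n) (xs (n + q)) (t/2)) \<longlonglongrightarrow> 1" using Suc.IH[OF t2] .
    have b: "(\<lambda>n. M (xs (n + q)) (xs (Suc (n + q))) (t/2)) \<longlonglongrightarrow> 1"
      using LIMSEQ_ignore_initial_segment[OF conv1[OF t2], of q] by simp
    have l: "(\<lambda>n. tn (M (xs n) (xs (n + q)) (t/2)) (M (xs (n + q)) (xs (Suc (n + q))) (t/2))) \<longlonglongrightarrow> tn 1 1"
      by (rule tn_lim[OF a b]) (use M01[OF t2] in auto)
    show ?case
    proof (rule tendsto_sandwich[OF _ _ l[unfolded tn_one'[of 1, simplified]] tendsto_const])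
      show "eventually (\<lambda>n. tn (M (xs n) (xs (n + q)) (t/2)) (M (xs (n + q)) (xs (Suc (n + q))) (t/2))
             \<le> M (xs n) (xs (n + Suc q)) t) sequentially"
        using Mtri[OF t2 t2] by simp
      show "eventually (\<lambda>n. M (xs n) (xs (n + Suc q)) t \<le> 1) sequentially" using Mle1[OF Suc.prems] by simp
    qed
  qed
  have "G_Cauchy M xs" unfolding G_Cauchy_def using cauchy by blast
  then obtain z where z: "\<And>t. t > 0 \<Longrightarrow> (\<lambda>n. M (xs n) z t) \<longlonglongrightarrow> 1"
    using GC unfolding G_complete_def fuzzy_converges_def by blast
  have Z: "P z (c * s + d)" if "P z s" "s > 0" "d > 0" for s d
  proof (cases "c * s \<ge> 1")
    case True then show ?thesis using that by (intro Ptriv) auto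
  next
    case False
    have cs: "c * s > 0" using c that by simp
    have zn: "(\<lambda>n. M z (xs (Suc n)) d) \<longlonglongrightarrow> 1"
      using LIMSEQ_ignore_initial_segment[OF z[OF that(3)], of 1] Msym[OF that(3)] by simp
    have "(\<lambda>n. tn (M z (xs (Suc n)) d) (1 - c * s)) \<longlonglongrightarrow> tn 1 (1 - c * s)"
      by (rule tn_lim[OF zn tendsto_const]) (use M01[OF that(3)] False cs in auto)
    then have ev1: "eventually (\<lambda>n. tn (M z (xs (Suc n)) d) (1 - c * s) > 1 - (c * s + d)) sequentially"
      using tn_one'[of "1 - c * s"] False cs that(3) by (intro order_tendstoD) auto
    have ev2: "eventually (\<lambda>n. c ^ n < s) sequentially" using cn0 that by (intro order_tendstoD) auto
    obtain n where n1: "tn (M z (xs (Suc n)) d) (1 - c * s) > 1 - (c * s + d)" and n2: "c ^ n < s"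
      using eventually_conj[OF ev1 ev2] by (auto simp: eventually_sequentially)
    have "P (xs n) s" using Pmono[OF Pxs cpos] n2 by simp
    then have "Theta M (T (xs n)) (T z) (c * s) > 1 - c * s"
      by (intro K[rule_format, OF that(2)]) (use that(1) in \<open>simp add: P_def\<close>)
    then have "Msup M (xs (Suc n)) (T z) (c * s) > 1 - c * s"
      by (rule Theta_gt[OF cs neT neT _ inT])
    then obtain w where w: "w \<in> T z" "M (xs (Suc n)) w (c * s) > 1 - c * s"
      using Msup_gt[OF cs neT[of z]] by blast
    have "tn (M z (xs (Suc n)) d) (1 - c * s) \<le> tn (M z (xs (Suc n)) d) (M (xs (Suc n)) w (c * s))"
      by (rule tn_mono) (use M01[OF that(3)] M01[OF cs] w False cs in auto)
    also have "\<dots> \<le> M z w (d + c * s)" by (rule Mtri) (use that cs in auto)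
    also have "\<dots> \<le> Msup M z (T z) (d + c * s)" by (rule Msup_upper) (use that cs w in auto)
    finally show ?thesis using n1 unfolding P_def by (simp add: add.commute)
  qed
  have Pz: "P z t" if "t > 0" for t
  proof -
    define D where "D = t / 2"
    have D: "D > 0" using that unfolding D_def by simp
    have inv: "P z (c ^ k + D)" for k
    proof (induction k)
      case 0 then show ?case using D by (intro Ptriv) simp
    next
      case (Suc k)
      have "P z (c * (c ^ k + D) + (1 - c) * D)"
        by (rule Z[OF Suc]) (use D c cpos[of k] in \<open>auto intro: add_pos_pos\<close>)
      moreover have "c * (c ^ k + D) + (1 - c) * D = c ^ Suc k + D" by (simp add: algebra_simps)
      ultimately show ?case by simp
    qed
    have "eventually (\<lambda>k. c ^ k < D) sequentially" using cn0 D by (intro order_tendstoD) auto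
    then obtain k where "c ^ k < D" by (auto simp: eventually_sequentially)
    then show ?thesis using Pmono[OF inv[of k]] cpos[of k] D unfolding D_def by simp
  qed
  have "z \<in> T z"
  proof (rule closed_lemma)
    show "compactin (fuzzy_topology M) (T z)" using TC unfolding C0_def by blast
    show "T z \<noteq> {}" by (rule neT)
    fix t e :: real assume te: "t > 0" "e > 0"
    define t' where "t' = min t e"
    have t': "t' > 0" "t' \<le> t" "t' \<le> e" unfolding t'_def using te by auto
    obtain w where "w \<in> T z" "M z w t' > 1 - t'" using Msup_gt[OF t'(1) neT[of z]] Pz[OF t'(1)]
      unfolding P_def by blast
    moreover have "M z w t' \<le> M z w t" using Mmono[OF t'(1,2)] .
    ultimately show "\<exists>w\<in>T z. M z w t > 1 - e" using t'(3) by (intro bexI[of _ w]) auto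
  qed
  then show ?thesis by blast
qed

end

theorem mainTheorem1:
  fixes M :: "'a \<Rightarrow> 'a \<Rightarrow> real \<Rightarrow> real"
    and tn :: "real \<Rightarrow> real \<Rightarrow> real"
    and T :: "'a \<Rightarrow> 'a set"
    and c :: real
  assumes "fuzzy_metric_space M tn"
    and "G_complete M"
    and "\<forall>x. T x \<in> C0 M"
    and "0 < c" and "c < 1"
    and "\<forall>x y t. t > 0 \<longrightarrow> min (Msup M x (T x) t) (Msup M y (T y) t) > 1 - t
           \<longrightarrow> Theta M (T x) (T y) (c * t) > 1 - c * t"
  shows "\<exists>z. z \<in> T z"
proof -
  interpret fms M tn by standard fact
  show ?thesis by (rule main) (use assms in auto)
qed

end
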